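(* Let $q\in\mathbb{C}\setminus\{0\}$ with $|q|\ne1$, $n\in\mathbb{N}$, $r\in(0,+\infty]$. Then $\mathcal{O}_q(\mathbb{D}_r^n)=\mathcal{O}_q(\mathbb{B}_r^n)$ as subspaces of the space of formal series $\sum_{k\in\mathbb{Z}_+^n}c_kx^k$ and as Fréchet algebras. Moreover, for each $\rho\in(0,r)$, on this algebra $$(|q|^{-2};|q|^{-2})_\infty^{n/2}\,\|\cdot\|_{\mathbb{D},\rho}\le\|\cdot\|_{\mathbb{B},\rho}\le\|\cdot\|_{\mathbb{D},\rho}\quad\text{if }|q|>1,$$ $$(|q|^{2};|q|^{2})_\infty^{n/2}\,\|\cdot\|_{\mathbb{D},\rho}\le\|\cdot\|_{\mathbb{B},\rho}\le\|\cdot\|_{\mathbb{D},\rho}\quad\text{if }|q|<1.$$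
   Context: $\mathcal{O}_q^{\mathrm{reg}}(\mathbb{C}^n)$: algebra generated by $x_1,\dots,x_n$ with $x_ix_j=qx_jx_i$ ($i<j$); basis $x^k=x_1^{k_1}\cdots x_n^{k_n}$, $k\in\mathbb{Z}_+^n$. Put $w_q(k)=1$ if $|q|\ge1$ and $w_q(k)=|q|^{\sum_{i<j}k_ik_j}$ if $|q|<1$; $u_q(k)=|q|^{\sum_{i<j}k_ik_j}$; $[m]_q=1+\dots+q^{m-1}$, $[m]_q!=[1]_q\cdots[m]_q$, $[0]_q!=1$, $[k]_q!=\prod_i[k_i]_q!$, $|k|=\sum k_i$; $(a;t)_\infty=\prod_{j\ge0}(1-at^j)$ for $|t|<1$. For $f=\sum_kc_kx^k$: $\|f\|_{\mathbb{D},\rho}=\sum_k|c_k|w_q(k)\rho^{|k|}$ and $\|f\|_{\mathbb{B},\rho}=\sum_k|c_k|\big([k]_{|q|^2}!/[|k|]_{|q|^2}!\big)^{1/2}u_q(k)\rho^{|k|}$. $\mathcal{O}_q(\mathbb{D}_r^n)$ (resp. $\mathcal{O}_q(\mathbb{B}_r^n)$) is the completion of $\mathcal{O}_q^{\mathrm{reg}}(\mathbb{C}^n)$ with respect to the submultiplicative norms $\|\cdot\|_{\mathbb{D},\rho}$ (resp. $\|\cdot\|_{\mathbb{B},\rho}$), $\rho\in(0,r)$; concretely it is the Fréchet algebra of formal series $\sum_kc_kx^k$ with all these norms finite, with multiplication extending that of $\mathcal{O}_q^{\mathrm{reg}}(\mathbb{C}^n)$. *)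

theory Defs
  imports "HOL-Analysis.Analysis"
begin

text \<open>Multi-indices k in Z_+^n are functions nat => nat vanishing outside {0..<n}
  (coordinates indexed 0..n-1). A formal series sum_k c_k x^k is its coefficient function
  c :: (nat => nat) => complex, required to vanish outside the multi-indices.\<close>

definition multi_idx :: "nat \<Rightarrow> (nat \<Rightarrow> nat) set" where
  "multi_idx n = {k. \<forall>i\<ge>n. k i = 0}"

definition mabs :: "nat \<Rightarrow> (nat \<Rightarrow> nat) \<Rightarrow> nat" where
  "mabs n k = (\<Sum>i<n. k i)"

definition cross :: "nat \<Rightarrow> (nat \<Rightarrow> nat) \<Rightarrow> nat" where
  "cross n k = (\<Sum>i<n. \<Sum>j\<in>{i<..<n}. k i * k j)"

definition qint :: "real \<Rightarrow> nat \<Rightarrow> real" where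
  "qint t m = (\<Sum>j<m. t ^ j)"

definition qfact :: "real \<Rightarrow> nat \<Rightarrow> real" where
  "qfact t m = (\<Prod>i\<in>{1..m}. qint t i)"

definition mqfact :: "real \<Rightarrow> nat \<Rightarrow> (nat \<Rightarrow> nat) \<Rightarrow> real" where
  "mqfact t n k = (\<Prod>i<n. qfact t (k i))"

definition wq :: "complex \<Rightarrow> nat \<Rightarrow> (nat \<Rightarrow> nat) \<Rightarrow> real" where
  "wq q n k = (if norm q \<ge> 1 then 1 else norm q ^ cross n k)"

definition uq :: "complex \<Rightarrow> nat \<Rightarrow> (nat \<Rightarrow> nat) \<Rightarrow> real" where
  "uq q n k = norm q ^ cross n k"

definition termD :: "complex \<Rightarrow> nat \<Rightarrow> real \<Rightarrow> ((nat \<Rightarrow> nat) \<Rightarrow> complex) \<Rightarrow> (nat \<Rightarrow> nat) \<Rightarrow> real" where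
  "termD q n \<rho> c k = norm (c k) * wq q n k * \<rho> ^ mabs n k"

definition termB :: "complex \<Rightarrow> nat \<Rightarrow> real \<Rightarrow> ((nat \<Rightarrow> nat) \<Rightarrow> complex) \<Rightarrow> (nat \<Rightarrow> nat) \<Rightarrow> real" where
  "termB q n \<rho> c k = norm (c k)
     * sqrt (mqfact ((norm q)\<^sup>2) n k / qfact ((norm q)\<^sup>2) (mabs n k))
     * uq q n k * \<rho> ^ mabs n k"

definition normD :: "complex \<Rightarrow> nat \<Rightarrow> real \<Rightarrow> ((nat \<Rightarrow> nat) \<Rightarrow> complex) \<Rightarrow> real" where
  "normD q n \<rho> c = (\<Sum>\<^sub>\<infinity>k\<in>multi_idx n. termD q n \<rho> c k)"

definition normB :: "complex \<Rightarrow> nat \<Rightarrow> real \<Rightarrow> ((nat \<Rightarrow> nat) \<Rightarrow> complex) \<Rightarrow> real" where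
  "normB q n \<rho> c = (\<Sum>\<^sub>\<infinity>k\<in>multi_idx n. termB q n \<rho> c k)"

definition OqD :: "complex \<Rightarrow> nat \<Rightarrow> ereal \<Rightarrow> ((nat \<Rightarrow> nat) \<Rightarrow> complex) set" where
  "OqD q n r = {c. (\<forall>k. k \<notin> multi_idx n \<longrightarrow> c k = 0) \<and>
      (\<forall>\<rho>. 0 < \<rho> \<and> ereal \<rho> < r \<longrightarrow> termD q n \<rho> c summable_on multi_idx n)}"

definition OqB :: "complex \<Rightarrow> nat \<Rightarrow> ereal \<Rightarrow> ((nat \<Rightarrow> nat) \<Rightarrow> complex) set" where
  "OqB q n r = {c. (\<forall>k. k \<notin> multi_idx n \<longrightarrow> c k = 0) \<and>
      (\<forall>\<rho>. 0 < \<rho> \<and> ereal \<rho> < r \<longrightarrow> termB q n \<rho> c summable_on multi_idx n)}"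

definition qpoch :: "real \<Rightarrow> real \<Rightarrow> real" where
  "qpoch a t = (\<Prod>j. 1 - a * t ^ j)"

end

theory Submission
  imports Defs
begin

definition poch :: "real \<Rightarrow> nat \<Rightarrow> real" where
  "poch s m = (\<Prod>j<m. 1 - s * s ^ j)"

lemma qint_eq: "t \<noteq> 1 \<Longrightarrow> qint t i = (1 - t^i) / (1 - t)"
  unfolding qint_def by (simp add: sum_gp_strict)

lemma qfact_Suc: "qfact t (Suc m) = qfact t m * qint t (Suc m)"
  unfolding qfact_def by (simp add: prod.nat_ivl_Suc' mult.commute)

lemma qfact_poch: assumes "t \<noteq> 1" shows "qfact t m = poch t m / (1 - t)^m"
proof (induction m)
  case 0 then show ?case by (simp add: qfact_def poch_def)
next
  case (Suc m)
  have "1 - t \<noteq> 0" using assms by simp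
  have p: "poch t (Suc m) = poch t m * (1 - t ^ Suc m)" by (simp add: poch_def)
  show ?case using \<open>1 - t \<noteq> 0\<close>
    by (simp only: qfact_Suc Suc qint_eq[OF assms] p) (simp add: field_simps)
qed

definition T :: "nat \<Rightarrow> nat" where "T m = (\<Sum>i<m. i)"

lemma T_add: "T (a + b) = T a + T b + a * b"
  by (induction b) (auto simp: T_def)

lemma qint_inv: assumes "t > 1" shows "qint t (Suc i) = t ^ i * qint (1/t) (Suc i)"
proof -
  have "t \<noteq> 1" "1/t \<noteq> 1" "t \<noteq> 0" using assms by auto
  then show ?thesis using assms
    by (simp add: qint_eq field_simps power_one_over)
qed

lemma qfact_inv: assumes "t > 1" shows "qfact t m = t ^ T m * qfact (1/t) m"
proof (induction m)
  case 0 then show ?case by (simp add: qfact_def T_def)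
next
  case (Suc m)
  then show ?case using qint_inv[OF assms, of m]
    by (simp add: qfact_Suc T_def power_add)
qed

lemma mabs_Suc: "mabs (Suc n) k = mabs n k + k n"
  by (simp add: mabs_def)

lemma mqfact_Suc: "mqfact t (Suc n) k = mqfact t n k * qfact t (k n)"
  by (simp add: mqfact_def)

lemma cross_Suc: "cross (Suc n) k = cross n k + mabs n k * k n"
proof -
  have a: "(\<Sum>j\<in>{i<..<Suc n}. k i * k j) = (\<Sum>j\<in>{i<..<n}. k i * k j) + k i * k n" if "i < n" for i
  proof -
    have "{i<..<Suc n} = insert n {i<..<n}" using that by auto
    then show ?thesis by simp
  qed
  have "cross (Suc n) k = (\<Sum>i<n. \<Sum>j\<in>{i<..<Suc n}. k i * k j)"
    by (simp add: cross_def)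
  also have "\<dots> = (\<Sum>i<n. (\<Sum>j\<in>{i<..<n}. k i * k j) + k i * k n)"
    by (rule sum.cong) (auto simp: a)
  also have "\<dots> = cross n k + mabs n k * k n"
    by (simp add: sum.distrib cross_def mabs_def sum_distrib_right)
  finally show ?thesis .
qed

lemma T_cross: "(\<Sum>i<n. T (k i)) + cross n k = T (mabs n k)"
proof (induction n)
  case 0 then show ?case by (simp add: cross_def mabs_def T_def)
next
  case (Suc n)
  have "(\<Sum>i<Suc n. T (k i)) + cross (Suc n) k = ((\<Sum>i<n. T (k i)) + cross n k) + T (k n) + mabs n k * k n"
    by (simp add: cross_Suc)
  also have "\<dots> = T (mabs (Suc n) k)" by (simp only: Suc mabs_Suc T_add)
  finally show ?case .
qed

lemma mqfact_inv: assumes "t > 1"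
  shows "mqfact t n k / qfact t (mabs n k) * t ^ cross n k
       = mqfact (1/t) n k / qfact (1/t) (mabs n k)"
proof -
  have m: "mqfact t n k = t ^ (\<Sum>i<n. T (k i)) * mqfact (1/t) n k"
    by (simp add: mqfact_def qfact_inv[OF assms] prod.distrib power_sum)
  have "t ^ T (mabs n k) = t ^ (\<Sum>i<n. T (k i)) * t ^ cross n k"
    by (simp flip: T_cross add: power_add)
  moreover have "t ^ T (mabs n k) \<noteq> 0" using assms by simp
  ultimately show ?thesis using assms
    by (simp add: m qfact_inv[OF assms] field_simps)
qed

lemma mqfact_poch: assumes "s \<noteq> 1"
  shows "mqfact s n k = (\<Prod>i<n. poch s (k i)) / (1 - s) ^ mabs n k"
  using assms by (simp add: mqfact_def qfact_poch mabs_def power_sum prod_dividef)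

context fixes s :: real assumes s: "0 < s" "s < 1" begin

lemma fac_pos: "0 < 1 - s * s ^ j"
proof -
  have "s * s ^ j = s ^ Suc j" by simp
  also have "\<dots> < 1" using s by (rule power_Suc_less_one)
  finally show ?thesis by simp
qed

lemma fac_le1: "1 - s * s ^ j \<le> 1" using s by simp

lemma poch_pos: "0 < poch s m"
  unfolding poch_def using fac_pos by (simp add: prod_pos)

lemma poch_le1: "poch s m \<le> 1"
  unfolding poch_def using fac_pos fac_le1 by (simp add: prod_le_1 less_imp_le)

lemma poch_super: "poch s a * poch s b \<le> poch s (a + b)"
proof (induction b)
  case 0 then show ?case by (simp add: poch_def)
next
  case (Suc b)
  have "s ^ (a + b) \<le> s ^ b" using s by (simp add: power_decreasing)
  then have "1 - s * s ^ b \<le> 1 - s * s ^ (a + b)" using s by simp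
  then have "poch s a * poch s b * (1 - s * s ^ b) \<le> poch s (a + b) * (1 - s * s ^ (a+b))"
    using Suc fac_pos[of b] poch_pos by (intro mult_mono) (auto simp: less_imp_le)
  then show ?case by (simp add: poch_def mult.assoc)
qed

lemma poch_multi: "(\<Prod>i<n. poch s (k i)) \<le> poch s (mabs n k)"
proof (induction n)
  case 0 then show ?case by (simp add: poch_def mabs_def)
next
  case (Suc n)
  have "(\<Prod>i<Suc n. poch s (k i)) = (\<Prod>i<n. poch s (k i)) * poch s (k n)" by simp
  also have "\<dots> \<le> poch s (mabs n k) * poch s (k n)"
    using Suc poch_pos by (intro mult_right_mono) (auto simp: less_imp_le)
  also have "\<dots> \<le> poch s (mabs (Suc n) k)" using poch_super by (simp add: mabs_Suc)
  finally show ?case .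
qed

lemma conv: "convergent_prod (\<lambda>j. 1 - s * s ^ j)"
proof -
  have "summable (\<lambda>j. norm ((1 - s * s ^ j) - 1))"
    using s by (simp add: summable_geometric summable_mult)
  then show ?thesis by (intro abs_convergent_prod_imp_convergent_prod summable_imp_abs_convergent_prod)
qed

lemma qpoch_le: "qpoch s s \<le> poch s m"
proof -
  have L: "(\<lambda>N. \<Prod>i\<le>N. 1 - s * s ^ i) \<longlonglongrightarrow> qpoch s s"
    unfolding qpoch_def by (rule convergent_prod_LIMSEQ[OF conv])
  show ?thesis
  proof (rule LIMSEQ_le_const2[OF L], intro exI allI impI)
    fix N assume "m \<le> N"
    then have "{..N} = {..<m} \<union> {m..N}" by auto
    moreover have "(\<Prod>i\<in>{m..N}. 1 - s * s ^ i) \<le> 1"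
      using fac_pos fac_le1 by (simp add: prod_le_1 less_imp_le)
    moreover have "(\<Prod>i\<in>{..<m} \<union> {m..N}. 1 - s * s ^ i) = poch s m * (\<Prod>i\<in>{m..N}. 1 - s * s ^ i)"
      unfolding poch_def by (subst prod.union_disjoint) auto
    ultimately show "(\<Prod>i\<le>N. 1 - s * s ^ i) \<le> poch s m"
      using poch_pos[of m] by (simp add: mult_left_le)
  qed
qed

lemma qpoch_pos: "0 < qpoch s s"
proof -
  have L: "(\<lambda>N. \<Prod>i\<le>N. 1 - s * s ^ i) \<longlonglongrightarrow> qpoch s s"
    unfolding qpoch_def by (rule convergent_prod_LIMSEQ[OF conv])
  have "0 \<le> qpoch s s"
    by (rule LIMSEQ_le_const[OF L], rule exI[of _ 0]) (intro allI impI prod_nonneg ballI, rule less_imp_le, rule fac_pos)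
  moreover have "qpoch s s \<noteq> 0" unfolding qpoch_def
    using prodinf_nonzero[OF conv] fac_pos by (metis less_irrefl)
  ultimately show ?thesis by simp
qed

lemma ratio_bounds:
  "qpoch s s ^ n \<le> mqfact s n k / qfact s (mabs n k) \<and> mqfact s n k / qfact s (mabs n k) \<le> 1"
proof -
  have e: "mqfact s n k / qfact s (mabs n k) = (\<Prod>i<n. poch s (k i)) / poch s (mabs n k)"
    using s poch_pos[of "mabs n k"] by (simp add: mqfact_poch qfact_poch)
  have P: "qpoch s s ^ n \<le> (\<Prod>i<n. poch s (k i))"
    using prod_mono[of "{..<n}" "\<lambda>_. qpoch s s" "\<lambda>i. poch s (k i)"] qpoch_le qpoch_pos
    by (simp add: less_imp_le)
  have Q: "(\<Prod>i<n. poch s (k i)) \<le> (\<Prod>i<n. poch s (k i)) / poch s (mabs n k)"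
    using poch_pos poch_le1 by (simp add: le_divide_eq prod_nonneg less_imp_le mult_left_le)
  show ?thesis unfolding e using P Q poch_multi poch_pos[of "mabs n k"] by auto
qed
end

lemma powr_sqrt: assumes "P > 0" shows "P powr (real n / 2) = sqrt (P ^ n)"
proof -
  have "sqrt (P ^ n) = (P ^ n) powr (1/2)" using assms by (simp add: powr_half_sqrt)
  also have "\<dots> = (P powr real n) powr (1/2)" using assms by (simp add: powr_realpow)
  also have "\<dots> = P powr (real n / 2)" by (simp add: powr_powr)
  finally show ?thesis by simp
qed

lemma sqrt_bounds: assumes "0 < s" "s < 1"
  shows "qpoch s s powr (real n / 2) \<le> sqrt (mqfact s n k / qfact s (mabs n k))
       \<and> sqrt (mqfact s n k / qfact s (mabs n k)) \<le> 1"
  using ratio_bounds[OF assms, of n k] powr_sqrt[OF qpoch_pos[OF assms], of n]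
  by (simp add: real_sqrt_le_mono)

definition sq :: "complex \<Rightarrow> real" where
  "sq q = (if norm q > 1 then inverse ((norm q)\<^sup>2) else (norm q)\<^sup>2)"

lemma sq_range: assumes "q \<noteq> 0" "norm q \<noteq> 1" shows "0 < sq q" "sq q < 1"
proof -
  have "norm q > 0" using assms by simp
  show "0 < sq q" using assms by (simp add: sq_def)
  show "sq q < 1"
  proof (cases "norm q > 1")
    case True
    then have "1 < (norm q)\<^sup>2" by (simp add: one_less_power)
    then show ?thesis using True by (simp add: sq_def inverse_less_1_iff)
  next
    case False
    then have "norm q < 1" using assms by simp
    then have "(norm q)\<^sup>2 < 1" using \<open>norm q > 0\<close> by (simp add: power_less_one_iff)
    then show ?thesis using False by (simp add: sq_def)
  qed
qed

lemma termB_eq: assumes "q \<noteq> 0" "norm q \<noteq> 1"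
  shows "termB q n \<rho> c k = termD q n \<rho> c k * sqrt (mqfact (sq q) n k / qfact (sq q) (mabs n k))"
proof (cases "norm q > 1")
  case False
  then have "norm q < 1" using assms by simp
  then show ?thesis using False
    by (simp add: termB_def termD_def sq_def wq_def uq_def)
next
  case True
  define t where "t = (norm q)\<^sup>2"
  have t1: "t > 1" unfolding t_def using True by (simp add: one_less_power)
  have u: "norm q ^ cross n k = sqrt (t ^ cross n k)"
  proof -
    have "t ^ cross n k = (norm q ^ cross n k)\<^sup>2" unfolding t_def by (simp flip: power_mult add: mult.commute)
    then show ?thesis by simp
  qed
  have "sqrt (mqfact t n k / qfact t (mabs n k)) * norm q ^ cross n k
      = sqrt (mqfact t n k / qfact t (mabs n k) * t ^ cross n k)"
    by (simp only: u real_sqrt_mult)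
  also have "\<dots> = sqrt (mqfact (sq q) n k / qfact (sq q) (mabs n k))"
    using mqfact_inv[OF t1, of n k] True by (simp add: sq_def t_def inverse_eq_divide)
  finally have e: "sqrt (mqfact t n k / qfact t (mabs n k)) * norm q ^ cross n k
      = sqrt (mqfact (sq q) n k / qfact (sq q) (mabs n k))" .
  show ?thesis using True e
    by (simp add: termB_def termD_def wq_def uq_def t_def[symmetric] mult_ac)
qed

lemma pointwise: assumes "q \<noteq> 0" "norm q \<noteq> 1" "0 < \<rho>"
  shows "qpoch (sq q) (sq q) powr (real n / 2) * termD q n \<rho> c k \<le> termB q n \<rho> c k"
    "termB q n \<rho> c k \<le> termD q n \<rho> c k" "0 \<le> termB q n \<rho> c k" "0 \<le> termD q n \<rho> c k"
proof -
  have D: "0 \<le> termD q n \<rho> c k" using assms by (simp add: termD_def wq_def)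
  note b = sqrt_bounds[OF sq_range[OF assms(1,2)], of n k]
  show "qpoch (sq q) (sq q) powr (real n / 2) * termD q n \<rho> c k \<le> termB q n \<rho> c k"
    unfolding termB_eq[OF assms(1,2)] using b D by (simp add: mult.commute mult_left_mono)
  show "termB q n \<rho> c k \<le> termD q n \<rho> c k"
    unfolding termB_eq[OF assms(1,2)] using b D by (simp add: mult_left_le)
  show "0 \<le> termB q n \<rho> c k"
    unfolding termB_eq[OF assms(1,2)]
    by (rule mult_nonneg_nonneg[OF D order_trans[OF powr_ge_zero conjunct1[OF b]]])
  show "0 \<le> termD q n \<rho> c k" by (rule D)
qed

theorem theorem4p2:
  fixes q :: complex and n :: nat and r :: ereal
  assumes "q \<noteq> 0" and "norm q \<noteq> 1" and "0 < r"
  shows "OqD q n r = OqB q n r \<and>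
    (\<forall>\<rho>. 0 < \<rho> \<and> ereal \<rho> < r \<longrightarrow> (\<forall>c\<in>OqD q n r.
       (norm q > 1 \<longrightarrow>
          qpoch (inverse ((norm q)\<^sup>2)) (inverse ((norm q)\<^sup>2)) powr (real n / 2) * normD q n \<rho> c
            \<le> normB q n \<rho> c \<and> normB q n \<rho> c \<le> normD q n \<rho> c) \<and>
       (norm q < 1 \<longrightarrow>
          qpoch ((norm q)\<^sup>2) ((norm q)\<^sup>2) powr (real n / 2) * normD q n \<rho> c
            \<le> normB q n \<rho> c \<and> normB q n \<rho> c \<le> normD q n \<rho> c)))"
proof -
  define C where "C = qpoch (sq q) (sq q) powr (real n / 2)"
  have Cpos: "C > 0" unfolding C_def using qpoch_pos[OF sq_range[OF assms(1,2)]] by simp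
  have pw1: "C * termD q n \<rho> c k \<le> termB q n \<rho> c k" if "0 < \<rho>" for \<rho> c k
    unfolding C_def by (rule pointwise(1)[OF assms(1,2) that])
  note pw = pw1 pointwise(2-4)[OF assms(1,2)]
  have eqv: "termD q n \<rho> c summable_on multi_idx n \<longleftrightarrow> termB q n \<rho> c summable_on multi_idx n"
    if "0 < \<rho>" for \<rho> c
  proof
    assume "termD q n \<rho> c summable_on multi_idx n"
    then show "termB q n \<rho> c summable_on multi_idx n"
      by (rule summable_on_comparison_test) (use pw[OF that] in auto)
  next
    assume "termB q n \<rho> c summable_on multi_idx n"
    then have "(\<lambda>k. inverse C * termB q n \<rho> c k) summable_on multi_idx n"
      by (rule summable_on_cmult_right)
    then show "termD q n \<rho> c summable_on multi_idx n"
    proof (rule summable_on_comparison_test)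
      fix k
      have "C * termD q n \<rho> c k \<le> termB q n \<rho> c k" by (rule pw(1)[OF that])
      then show "termD q n \<rho> c k \<le> inverse C * termB q n \<rho> c k"
        using Cpos by (simp add: field_simps)
      show "0 \<le> termD q n \<rho> c k" by (rule pw(4)[OF that])
    qed
  qed
  have S: "OqD q n r = OqB q n r"
    unfolding OqD_def OqB_def using eqv by blast
  have B: "C * normD q n \<rho> c \<le> normB q n \<rho> c \<and> normB q n \<rho> c \<le> normD q n \<rho> c"
    if "0 < \<rho>" "ereal \<rho> < r" "c \<in> OqD q n r" for \<rho> c
  proof -
    have sD: "termD q n \<rho> c summable_on multi_idx n" using that by (simp add: OqD_def)
    then have sB: "termB q n \<rho> c summable_on multi_idx n" using eqv that(1) by blast
    have "C * normD q n \<rho> c = (\<Sum>\<^sub>\<infinity>k\<in>multi_idx n. C * termD q n \<rho> c k)"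
      unfolding normD_def by (rule infsum_cmult_right[symmetric]) (use sD in auto)
    also have "\<dots> \<le> normB q n \<rho> c" unfolding normB_def
      by (rule infsum_mono[OF summable_on_cmult_right[OF sD] sB]) (rule pw(1)[OF that(1)])
    finally show ?thesis
      unfolding normB_def normD_def using infsum_mono[OF sB sD] pw(2)[OF that(1)] by auto
  qed
  show ?thesis
  proof (intro conjI S allI impI ballI)
    fix \<rho> c assume h: "0 < \<rho> \<and> ereal \<rho> < r" "c \<in> OqD q n r"
    { assume "norm q > 1"
      then show "qpoch (inverse ((norm q)\<^sup>2)) (inverse ((norm q)\<^sup>2)) powr (real n / 2) * normD q n \<rho> c
            \<le> normB q n \<rho> c" "normB q n \<rho> c \<le> normD q n \<rho> c"
        using B[of \<rho> c] h by (auto simp: C_def sq_def) }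
    { assume "norm q < 1"
      then show "qpoch ((norm q)\<^sup>2) ((norm q)\<^sup>2) powr (real n / 2) * normD q n \<rho> c
            \<le> normB q n \<rho> c" "normB q n \<rho> c \<le> normD q n \<rho> c"
        using B[of \<rho> c] h by (auto simp: C_def sq_def) }
  qed
qed

end
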